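(* The set $\mathcal{I}_{\mathrm{str}}(\Omega_1)$ has the cardinality of the continuum.
   Context: Let $\mathbf{2}=\{0,1\}$. A partial function of arity $n$ on $\mathbf{2}$ is a map $f:\operatorname{dom} f\to\mathbf{2}$ with $\operatorname{dom} f\subseteq \mathbf{2}^n$; it is total if $\operatorname{dom} f=\mathbf{2}^n$. $P_{\mathbf{2}}$ is the set of all partial functions, $O_{\mathbf{2}}$ the set of total ones. Composition $F=f(g_1,\dots,g_n)$ is given by $F(\mathbf{x})=f(g_1(\mathbf{x}),\dots,g_n(\mathbf{x}))$ on $\operatorname{dom} F=\{\mathbf{x}\in\bigcap_i\operatorname{dom} g_i : (g_1(\mathbf{x}),\dots,g_n(\mathbf{x}))\in\operatorname{dom} f\}$. A partial clone is a composition-closed subset of $P_{\mathbf{2}}$ containing all projections; a total clone is one contained in $O_{\mathbf{2}}$. A partial clone $X$ is strong if it contains every restriction of each of its members. For a total clone $C$, $\mathcal{I}_{\mathrm{str}}(C)$ is the set of all strong partial clones $X$ with $X\cap O_{\mathbf{2}}=C$. $\Omega_1$ is the total clone generated by all unary total Boolean functions. *)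

theory Defs
  imports Complex_Main "HOL-Library.Equipollence"
begin

text \<open>A partial Boolean function of arity n is a pair (n, f) where f maps
  argument tuples (bool lists of length n; True = 1, False = 0) to an optional value;
  f xs = None means xs is outside the domain.\<close>
type_synonym pfun = "nat \<times> (bool list \<Rightarrow> bool option)"

definition P2 :: "pfun set" where
  "P2 = {(n, f). 1 \<le> n \<and> (\<forall>xs. f xs \<noteq> None \<longrightarrow> length xs = n)}"

definition O2 :: "pfun set" where
  "O2 = {(n, f). (n, f) \<in> P2 \<and> (\<forall>xs. length xs = n \<longrightarrow> f xs \<noteq> None)}"

definition proj :: "nat \<Rightarrow> nat \<Rightarrow> pfun" where
  "proj n i = (n, \<lambda>xs. if length xs = n then Some (xs ! i) else None)"

definition compose :: "pfun \<Rightarrow> nat \<Rightarrow> (bool list \<Rightarrow> bool option) list \<Rightarrow> pfun" where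
  "compose F m gs = (m, \<lambda>xs. if length xs = m \<and> (\<forall>g\<in>set gs. g xs \<noteq> None)
                             then snd F (map (\<lambda>g. the (g xs)) gs) else None)"

definition partial_clone :: "pfun set \<Rightarrow> bool" where
  "partial_clone X \<longleftrightarrow> X \<subseteq> P2
     \<and> (\<forall>n i. 1 \<le> n \<and> i < n \<longrightarrow> proj n i \<in> X)
     \<and> (\<forall>n f m gs. (n, f) \<in> X \<and> 1 \<le> m \<and> length gs = n \<and> (\<forall>g\<in>set gs. (m, g) \<in> X)
            \<longrightarrow> compose (n, f) m gs \<in> X)"

definition total_clone :: "pfun set \<Rightarrow> bool" where
  "total_clone C \<longleftrightarrow> partial_clone C \<and> C \<subseteq> O2"

definition strong :: "pfun set \<Rightarrow> bool" where
  "strong X \<longleftrightarrow> (\<forall>n f g. (n, f) \<in> X \<and> g \<subseteq>\<^sub>m f \<longrightarrow> (n, g) \<in> X)"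

definition clone_gen :: "pfun set \<Rightarrow> pfun set" where
  "clone_gen F = \<Inter>{C. partial_clone C \<and> F \<subseteq> C}"

definition Omega1 :: "pfun set" where
  "Omega1 = clone_gen {F \<in> O2. fst F = 1}"

definition I_str :: "pfun set \<Rightarrow> pfun set set" where
  "I_str C = {X. partial_clone X \<and> strong X \<and> X \<inter> O2 = C}"

end

theory Submission
  imports Defs "HOL-Analysis.Analysis" "HOL-Computational_Algebra.Primes" "HOL-Number_Theory.Cong"
begin


definition pres :: "bool list set \<Rightarrow> pfun \<Rightarrow> bool" where
  "pres R F \<longleftrightarrow> (\<forall>rs. (\<forall>r\<in>set rs. snd F r \<noteq> None) \<and> (\<forall>l<fst F. map (\<lambda>r. r!l) rs \<in> R)
      \<longrightarrow> map (\<lambda>r. the (snd F r)) rs \<in> R)"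

definition PC :: "bool list set set \<Rightarrow> pfun set" where
  "PC Rs = {F\<in>P2. \<forall>R\<in>Rs. pres R F}"

lemma pres_proj: assumes i: "i < n" shows "pres R (proj n i)"
  unfolding pres_def
proof (intro allI impI)
  fix rs assume a: "(\<forall>r\<in>set rs. snd (proj n i) r \<noteq> None) \<and> (\<forall>l<fst (proj n i). map (\<lambda>r. r ! l) rs \<in> R)"
  then have d: "\<forall>r\<in>set rs. length r = n" and c: "\<forall>l<n. map (\<lambda>r. r ! l) rs \<in> R"
    by (auto simp: proj_def split: if_splits)
  have "map (\<lambda>r. the (snd (proj n i) r)) rs = map (\<lambda>r. r ! i) rs"
    using d by (auto simp: proj_def intro: map_cong)
  moreover have "map (\<lambda>r. r ! i) rs \<in> R" using c i by simp
  ultimately show "map (\<lambda>r. the (snd (proj n i) r)) rs \<in> R" by metis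
qed

lemma pres_compose:
  assumes pf: "pres R (n,f)" and len: "length gs = n" and pg: "\<forall>g\<in>set gs. pres R (m,g)"
  shows "pres R (compose (n,f) m gs)"
  unfolding pres_def
proof (intro allI impI)
  fix rs assume a: "(\<forall>r\<in>set rs. snd (compose (n, f) m gs) r \<noteq> None) \<and>
         (\<forall>l<fst (compose (n, f) m gs). map (\<lambda>r. r ! l) rs \<in> R)"
  have dom: "\<forall>r\<in>set rs. length r = m \<and> (\<forall>g\<in>set gs. g r \<noteq> None) \<and> f (map (\<lambda>g. the (g r)) gs) \<noteq> None"
  proof
    fix r assume "r \<in> set rs"
    then have "snd (compose (n, f) m gs) r \<noteq> None" using a by blast
    then show "length r = m \<and> (\<forall>g\<in>set gs. g r \<noteq> None) \<and> f (map (\<lambda>g. the (g r)) gs) \<noteq> None"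
      by (simp add: compose_def split: if_splits)
  qed
  have cols: "\<forall>l<m. map (\<lambda>r. r ! l) rs \<in> R" using a by (simp add: compose_def)
  have gi: "map (\<lambda>r. the (g r)) rs \<in> R" if "g \<in> set gs" for g
    using pg that dom cols unfolding pres_def by auto
  define rs' where "rs' = map (\<lambda>r. map (\<lambda>g. the (g r)) gs) rs"
  have "map (\<lambda>r. the (f r)) rs' \<in> R"
  proof -
    have "\<forall>r\<in>set rs'. f r \<noteq> None" using dom by (auto simp: rs'_def)
    moreover have "\<forall>l<n. map (\<lambda>r. r ! l) rs' \<in> R"
    proof (intro allI impI)
      fix l assume "l < n"
      then have "map (\<lambda>r. r ! l) rs' = map (\<lambda>r. the ((gs!l) r)) rs" using len by (simp add: rs'_def)
      then show "map (\<lambda>r. r ! l) rs' \<in> R" using gi \<open>l<n\<close> len by simp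
    qed
    ultimately show ?thesis using pf unfolding pres_def by auto
  qed
  moreover have "map (\<lambda>r. the (f r)) rs' = map (\<lambda>r. the (snd (compose (n, f) m gs) r)) rs"
    using dom by (auto simp: rs'_def compose_def)
  ultimately show "map (\<lambda>r. the (snd (compose (n, f) m gs) r)) rs \<in> R" by simp
qed

lemma pres_restrict: "pres R (n,f) \<Longrightarrow> g \<subseteq>\<^sub>m f \<Longrightarrow> pres R (n,g)"
  unfolding pres_def map_le_def
proof (clarsimp)
  fix rs assume p: "\<forall>rs. (\<forall>r\<in>set rs. \<exists>y. f r = Some y) \<and> (\<forall>l<n. map (\<lambda>r. r ! l) rs \<in> R) \<longrightarrow>
              map (\<lambda>r. the (f r)) rs \<in> R"
    and le: "\<forall>a\<in>dom g. g a = f a" and d: "\<forall>r\<in>set rs. \<exists>y. g r = Some y" and c: "\<forall>l<n. map (\<lambda>r. r ! l) rs \<in> R"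
  have e: "\<forall>r\<in>set rs. g r = f r" using le d by auto
  then have eq: "map (\<lambda>r. the (g r)) rs = map (\<lambda>r. the (f r)) rs" by (auto intro: map_cong)
  moreover have "\<forall>r\<in>set rs. \<exists>y. f r = Some y" using e d by metis
  then have fR: "map (\<lambda>r. the (f r)) rs \<in> R" using p c by blast
  show "map (\<lambda>r. the (g r)) rs \<in> R" using fR by (simp only: eq)
qed

lemma compose_P2: "1 \<le> m \<Longrightarrow> compose F m gs \<in> P2"
  by (auto simp: P2_def compose_def split: if_splits)

lemma proj_P2: "1 \<le> n \<Longrightarrow> proj n i \<in> P2"
  by (auto simp: P2_def proj_def split: if_splits)

lemma PC_clone: "partial_clone (PC Rs)"
  unfolding partial_clone_def
proof (intro conjI allI impI)
  show "PC Rs \<subseteq> P2" by (auto simp: PC_def)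
next
  fix n i :: nat assume "1 \<le> n \<and> i < n" then show "proj n i \<in> PC Rs"
    by (auto simp: PC_def proj_P2 pres_proj)
next
  fix n :: nat and f and m :: nat and gs assume a: "(n, f) \<in> PC Rs \<and> 1 \<le> m \<and> length gs = n \<and> (\<forall>g\<in>set gs. (m, g) \<in> PC Rs)"
  then show "compose (n, f) m gs \<in> PC Rs"
    by (auto simp: PC_def compose_P2 intro!: pres_compose)
qed

lemma PC_strong: "strong (PC Rs)"
  unfolding strong_def PC_def
proof (clarsimp)
  fix n f g assume "(n,f) \<in> P2" "\<forall>R\<in>Rs. pres R (n, f)" "g \<subseteq>\<^sub>m f"
  then show "(n, g) \<in> P2 \<and> (\<forall>R\<in>Rs. pres R (n, g))"
    by (auto simp: P2_def map_le_def pres_restrict dom_def)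
qed




lemma O2_iff: "(n,f) \<in> O2 \<longleftrightarrow> (n,f) \<in> P2 \<and> (\<forall>xs. length xs = n \<longrightarrow> f xs \<noteq> None)"
  by (simp add: O2_def)

lemma P2_iff: "(n,f) \<in> P2 \<longleftrightarrow> 1 \<le> n \<and> (\<forall>xs. f xs \<noteq> None \<longrightarrow> length xs = n)"
  by (simp add: P2_def)

lemma O2_clone: "partial_clone O2"
  unfolding partial_clone_def
proof (intro conjI allI impI)
  show "O2 \<subseteq> P2" by (auto simp: O2_def)
next
  fix n i :: nat assume h: "1 \<le> n \<and> i < n"
  have "proj n i \<in> P2" using proj_P2 h by blast
  then show "proj n i \<in> O2" unfolding proj_def O2_iff by simp
next
  fix n :: nat and f and m :: nat and gs assume a: "(n, f) \<in> O2 \<and> 1 \<le> m \<and> length gs = n \<and> (\<forall>g\<in>set gs. (m, g) \<in> O2)"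
  have tg: "\<forall>g\<in>set gs. \<forall>xs. length xs = m \<longrightarrow> g xs \<noteq> None" using a by (simp add: O2_iff)
  have tf: "\<forall>ys. length ys = n \<longrightarrow> f ys \<noteq> None" using a by (simp add: O2_iff)
  have "\<forall>xs. length xs = m \<longrightarrow> snd (compose (n, f) m gs) xs \<noteq> None"
    using tg tf a by (simp add: compose_def)
  moreover have "compose (n, f) m gs \<in> P2" using a compose_P2 by blast
  ultimately show "compose (n, f) m gs \<in> O2"
    unfolding compose_def O2_iff by simp
qed

lemma Omega1_sub: "partial_clone C \<Longrightarrow> {F \<in> O2. fst F = 1} \<subseteq> C \<Longrightarrow> Omega1 \<subseteq> C"
  unfolding Omega1_def clone_gen_def by blast

lemma Omega1_O2: "Omega1 \<subseteq> O2"
  by (rule Omega1_sub[OF O2_clone]) auto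

definition closedR :: "bool list set \<Rightarrow> bool" where
  "closedR R \<longleftrightarrow> (\<forall>xs\<in>R. map Not xs \<in> R \<and> replicate (length xs) True \<in> R \<and> replicate (length xs) False \<in> R)"

lemma map_bool_fun: "map (\<phi>::bool\<Rightarrow>bool) xs = (if \<phi> True then (if \<phi> False then replicate (length xs) True else xs)
     else (if \<phi> False then map Not xs else replicate (length xs) False))"
proof (cases "\<phi> True"; cases "\<phi> False")
  assume "\<phi> True" "\<phi> False" then have "\<phi> = (\<lambda>_. True)" by (simp add: fun_eq_iff all_bool_eq)
  then show ?thesis by (simp add: map_replicate_const)
next
  assume "\<phi> True" "\<not>\<phi> False" then have "\<phi> = id" by (simp add: fun_eq_iff all_bool_eq)
  then show ?thesis by simp
next
  assume "\<not>\<phi> True" "\<phi> False" then have "\<phi> = Not" by (simp add: fun_eq_iff all_bool_eq)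
  then show ?thesis by simp
next
  assume "\<not>\<phi> True" "\<not>\<phi> False" then have "\<phi> = (\<lambda>_. False)" by (simp add: fun_eq_iff all_bool_eq)
  then show ?thesis by (simp add: map_replicate_const)
qed

lemma unary_pres:
  assumes F: "F \<in> O2" "fst F = 1" and R: "closedR R" shows "pres R F"
  unfolding pres_def
proof (intro allI impI)
  obtain u where Fu: "F = (1,u)" using F by (cases F) auto
  fix rs assume a: "(\<forall>r\<in>set rs. snd F r \<noteq> None) \<and> (\<forall>l<fst F. map (\<lambda>r. r ! l) rs \<in> R)"
  have uP: "\<forall>xs. u xs \<noteq> None \<longrightarrow> length xs = 1" using F(1) Fu unfolding O2_def P2_def by blast
  have len: "\<forall>r\<in>set rs. length r = 1" using a Fu uP by simp
  have c0: "map (\<lambda>r. r ! 0) rs \<in> R" using a Fu by auto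
  define \<phi> where "\<phi> b = the (u [b])" for b
  have "\<forall>r\<in>set rs. r = [r!0]"
  proof
    fix r assume "r \<in> set rs" then have "length r = 1" using len by blast
    then show "r = [r!0]" by (cases r) auto
  qed
  then have eq: "map (\<lambda>r. the (snd F r)) rs = map \<phi> (map (\<lambda>r. r ! 0) rs)"
    unfolding map_map
  proof (intro map_cong refl)
    fix x assume h: "\<forall>r\<in>set rs. r = [r!0]" and x: "x \<in> set rs"
    then have xe: "x = [x!0]" by blast
    have "the (snd F x) = the (u [x!0])" using Fu arg_cong[OF xe, of u] by simp
    then show "the (snd F x) = (\<phi> \<circ> (\<lambda>r. r ! 0)) x" by (simp add: \<phi>_def)
  qed
  have mR: "map \<phi> (map (\<lambda>r. r ! 0) rs) \<in> R"
    using c0 R unfolding closedR_def by (subst map_bool_fun) auto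
  show "map (\<lambda>r. the (snd F r)) rs \<in> R" using mR by (simp only: eq)
qed

lemma O2_P2: "O2 \<subseteq> P2" by (auto simp: O2_def)

lemma Omega1_PC: assumes "\<forall>R\<in>Rs. closedR R" shows "Omega1 \<subseteq> PC Rs"
proof (rule Omega1_sub[OF PC_clone])
  show "{F \<in> O2. fst F = 1} \<subseteq> PC Rs"
  proof
    fix F assume "F \<in> {F \<in> O2. fst F = 1}"
    then have F: "F \<in> O2" "fst F = 1" by auto
    then have "F \<in> P2" using O2_P2 by blast
    moreover have "\<forall>R\<in>Rs. pres R F" using F assms unary_pres by blast
    ultimately show "F \<in> PC Rs" by (simp add: PC_def)
  qed
qed

definition sigma :: "bool list set" where
  "sigma = {xs. length xs = 4 \<and> (xs!0 = xs!1 \<or> xs!2 = xs!3)}"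

lemma pres_sigma_use:
  assumes p: "pres sigma (n,f)" and d: "f x1 \<noteq> None" "f x2 \<noteq> None" "f x3 \<noteq> None" "f x4 \<noteq> None"
    and c: "\<forall>l<n. x1!l = x2!l \<or> x3!l = x4!l"
  shows "f x1 = f x2 \<or> f x3 = f x4"
proof -
  have H: "(\<forall>r\<in>set [x1,x2,x3,x4]. f r \<noteq> None) \<and> (\<forall>l<n. map (\<lambda>r. r!l) [x1,x2,x3,x4] \<in> sigma)
      \<longrightarrow> map (\<lambda>r. the (f r)) [x1,x2,x3,x4] \<in> sigma"
    using p unfolding pres_def fst_conv snd_conv by (rule spec)
  have "(\<forall>r\<in>set [x1,x2,x3,x4]. f r \<noteq> None)" using d by simp
  moreover have "\<forall>l<n. map (\<lambda>r. r!l) [x1,x2,x3,x4] \<in> sigma" using c by (simp add: sigma_def)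
  ultimately have "map (\<lambda>r. the (f r)) [x1,x2,x3,x4] \<in> sigma" using H by blast
  then have "the (f x1) = the (f x2) \<or> the (f x3) = the (f x4)" by (simp add: sigma_def)
  moreover obtain a1 a2 a3 a4 where "f x1 = Some a1" "f x2 = Some a2" "f x3 = Some a3" "f x4 = Some a4"
    using d by blast
  ultimately show ?thesis by simp
qed

lemma chain_pair:
  fixes g :: "bool list \<Rightarrow> bool"
  shows "length x = n \<Longrightarrow> length y = n \<Longrightarrow> g x \<noteq> g y \<Longrightarrow>
    \<exists>a b i. length a = n \<and> length b = n \<and> g a \<noteq> g b \<and> i < n \<and> (\<forall>l<n. l \<noteq> i \<longrightarrow> a!l = b!l)"
proof (induction "card {l. l<n \<and> x!l \<noteq> y!l}" arbitrary: x y rule: less_induct)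
  case less
  define D where "D = {l. l<n \<and> x!l \<noteq> y!l}"
  have fD: "finite D" by (simp add: D_def)
  show ?case
  proof (cases "card D \<le> 1")
    case True
    show ?thesis
    proof (cases "D = {}")
      case True
      then have "x = y" using less.prems by (intro nth_equalityI) (auto simp: D_def)
      then show ?thesis using less.prems by simp
    next
      case False
      then have "card D = 1" using True fD by (simp add: card_gt_0_iff le_eq_less_or_eq)
      then obtain i where Di: "D = {i}" by (auto simp: card_Suc_eq)
      then have "i < n" by (auto simp: D_def)
      moreover have "\<forall>l<n. l \<noteq> i \<longrightarrow> x!l = y!l" using Di by (auto simp: D_def)
      ultimately show ?thesis using less.prems by blast
    qed
  next
    case False
    then obtain l where lD: "l \<in> D" by fastforce
    then have ln: "l < n" by (simp add: D_def)
    define z where "z = x[l := y!l]"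
    have lz: "length z = n" using less.prems by (simp add: z_def)
    have D1: "{k. k<n \<and> x!k \<noteq> z!k} = {l}" using lD ln less.prems by (auto simp: z_def D_def nth_list_update)
    have D2: "{k. k<n \<and> z!k \<noteq> y!k} = D - {l}" using ln less.prems by (auto simp: z_def D_def nth_list_update)
    have c1: "card {k. k<n \<and> x!k \<noteq> z!k} < card {l. l<n \<and> x!l \<noteq> y!l}"
      using D1 False by (simp add: D_def)
    have c2: "card {k. k<n \<and> z!k \<noteq> y!k} < card {l. l<n \<and> x!l \<noteq> y!l}"
      unfolding D2 D_def[symmetric] using fD lD by (rule card_Diff1_less)
    show ?thesis
    proof (cases "g x = g z")
      case True
      then have "g z \<noteq> g y" using less.prems by simp
      then show ?thesis using less.hyps[OF c2 lz less.prems(2)] by blast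
    next
      case False
      then show ?thesis using less.hyps[OF c1 less.prems(1) lz] by blast
    qed
  qed
qed

lemma ess_unary:
  assumes p: "pres sigma (n,f)" and O: "(n,f) \<in> O2"
  shows "\<exists>i<n. \<forall>x y. length x = n \<and> length y = n \<and> x!i = y!i \<longrightarrow> f x = f y"
proof -
  have n1: "1 \<le> n" and tot: "\<forall>xs. length xs = n \<longrightarrow> f xs \<noteq> None" using O by (auto simp: O2_iff P2_iff)
  show ?thesis
  proof (cases "\<forall>x y. length x = n \<and> length y = n \<longrightarrow> f x = f y")
    case True
    have "0 < n" using n1 by simp
    then show ?thesis using True by blast
  next
    case False
    then obtain x y where xy: "length x = n" "length y = n" "f x \<noteq> f y" by blast
    define g where "g xs = the (f xs)" for xs
    obtain vx vy where "f x = Some vx" "f y = Some vy" using xy tot by blast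
    then have "g x \<noteq> g y" using xy(3) by (simp add: g_def)
    then obtain a b i where ab: "length a = n" "length b = n" "g a \<noteq> g b" "i < n" "\<forall>l<n. l \<noteq> i \<longrightarrow> a!l = b!l"
      using chain_pair[OF xy(1,2)] by blast
    have fab: "f a \<noteq> f b" using ab(3) by (auto simp: g_def)
    have "\<forall>x y. length x = n \<and> length y = n \<and> x!i = y!i \<longrightarrow> f x = f y"
    proof (intro allI impI)
      fix x' y' :: "bool list" assume h: "length x' = n \<and> length y' = n \<and> x'!i = y'!i"
      have col: "\<forall>l<n. a!l = b!l \<or> x'!l = y'!l"
      proof (intro allI impI)
        fix l assume ln: "l < n"
        show "a!l = b!l \<or> x'!l = y'!l"
        proof (cases "l = i")
          case True then show ?thesis using h by simp
        next
          case False then show ?thesis using ab(5) ln by blast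
        qed
      qed
      have "f a \<noteq> None" "f b \<noteq> None" "f x' \<noteq> None" "f y' \<noteq> None" using tot ab h by auto
      then have "f a = f b \<or> f x' = f y'" using pres_sigma_use[OF p _ _ _ _ col] by blast
      then show "f x' = f y'" using fab by blast
    qed
    then show ?thesis using ab(4) by blast
  qed
qed

lemma unary_in_Omega1:
  assumes O: "(n,f) \<in> O2" and i: "i < n" and dep: "\<forall>x y. length x = n \<and> length y = n \<and> x!i = y!i \<longrightarrow> f x = f y"
  shows "(n,f) \<in> Omega1"
proof -
  have n1: "1 \<le> n" and tot: "\<forall>xs. length xs = n \<longrightarrow> f xs \<noteq> None"
    and dom: "\<forall>xs. f xs \<noteq> None \<longrightarrow> length xs = n" using O by (auto simp: O2_iff P2_iff)
  define u where "u ys = (if length ys = 1 then f (replicate n (hd ys)) else None)" for ys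
  have u1: "\<forall>xs. u xs \<noteq> None \<longrightarrow> length xs = 1" by (simp add: u_def)
  have u2: "\<forall>xs. length xs = 1 \<longrightarrow> u xs \<noteq> None"
  proof (intro allI impI)
    fix xs :: "bool list" assume "length xs = 1"
    then show "u xs \<noteq> None" using tot by (simp add: u_def)
  qed
  have uO: "(1,u) \<in> O2" unfolding O2_iff P2_iff using u1 u2 by simp
  define pf where "pf = snd (proj n i)"
  have pf: "proj n i = (n, pf)" by (simp add: pf_def proj_def)
  have eq: "compose (1,u) n [pf] = (n,f)"
  proof -
    have "\<forall>xs. snd (compose (1,u) n [pf]) xs = f xs"
    proof
      fix xs show "snd (compose (1,u) n [pf]) xs = f xs"
      proof (cases "length xs = n")
        case True
        have "(replicate n (xs!i)) ! i = xs ! i" using i by simp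
        then have "f (replicate n (xs!i)) = f xs" using dep[rule_format, of "replicate n (xs!i)" xs] True by simp
        then show ?thesis using True by (simp add: compose_def pf_def proj_def u_def)
      next
        case False
        then have "f xs = None" using dom by blast
        then show ?thesis using False by (simp add: compose_def)
      qed
    qed
    then show ?thesis by (simp add: compose_def fun_eq_iff)
  qed
  have "(n,f) \<in> C" if C: "partial_clone C" "{F \<in> O2. fst F = 1} \<subseteq> C" for C
  proof -
    have "(1,u) \<in> C" using uO C(2) by auto
    moreover have "proj n i \<in> C" using C(1) n1 i unfolding partial_clone_def by blast
    then have "(n,pf) \<in> C" using pf by simp
    moreover have cl: "\<forall>n f m gs. (n,f)\<in>C \<and> 1 \<le> m \<and> length gs = n \<and> (\<forall>g\<in>set gs. (m,g)\<in>C) \<longrightarrow> compose (n,f) m gs \<in> C"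
      using C(1) unfolding partial_clone_def by blast
    ultimately have "compose (1,u) n [pf] \<in> C" using n1 cl[rule_format, of 1 u n "[pf]"] by simp
    then show ?thesis using eq by simp
  qed
  then show ?thesis unfolding Omega1_def clone_gen_def by blast
qed

lemma total_sigma_Omega1: "F \<in> O2 \<Longrightarrow> pres sigma F \<Longrightarrow> F \<in> Omega1"
  using ess_unary unary_in_Omega1 by (cases F) blast




lemma exT:
  assumes p: "2 \<le> (p::nat)" and "i < 2*p" "j < 2*p" "k < 2*p" "i \<noteq> j" "i \<noteq> k"
  shows "\<exists>T. T \<subseteq> {..<2*p} \<and> card T = p \<and> i\<in>T \<and> j\<notin>T \<and> k\<notin>T"
proof -
  define U where "U = {..<2*p} - {i,j,k}"
  have "card {i,j,k} \<le> 3" by (simp add: card_insert_if)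
  moreover have "card U = 2*p - card {i,j,k}" unfolding U_def using assms
    by (subst card_Diff_subset) auto
  ultimately have "p - 1 \<le> card U" using p by linarith
  then obtain S where S: "S \<subseteq> U" "card S = p - 1" "finite S" by (rule obtain_subset_with_card_n)
  have iS: "i \<notin> S" using S(1) by (auto simp: U_def)
  have "insert i S \<subseteq> {..<2*p}" using S(1) assms by (auto simp: U_def)
  moreover have "card (insert i S) = p" using S iS p by simp
  moreover have "j \<notin> insert i S" "k \<notin> insert i S" using S(1) assms by (auto simp: U_def)
  ultimately show ?thesis by blast
qed

lemma modlem:
  fixes f :: "nat \<Rightarrow> nat"
  assumes p: "prime p" and q: "prime q" and pq: "p \<noteq> q"
    and H: "\<forall>T. T \<subseteq> {..<2*p} \<and> card T = p \<longrightarrow> q dvd sum f T"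
  shows "q dvd f 0"
proof -
  have p2: "2 \<le> p" using p prime_ge_2_nat by blast
  have eqm: "[f i = f 0] (mod q)" if i: "i < 2*p" for i
  proof (cases "i = 0")
    case True then show ?thesis by simp
  next
    case False
    define U where "U = {..<2*p} - {i,0}"
    have "card U = 2*p - 2" unfolding U_def using False i by (subst card_Diff_subset) auto
    then have "p - 1 \<le> card U" using p2 by linarith
    then obtain S where S: "S \<subseteq> U" "card S = p - 1" "finite S" by (rule obtain_subset_with_card_n)
    have iS: "i \<notin> S" "0 \<notin> S" using S(1) by (auto simp: U_def)
    have "q dvd sum f (insert i S)"
      using H S iS p2 i U_def by (intro H[rule_format]) (auto simp: U_def)
    moreover have "q dvd sum f (insert 0 S)"
      using H S iS p2 i U_def by (intro H[rule_format]) (auto simp: U_def)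
    ultimately have "[sum f S + f i = sum f S + f 0] (mod q)"
      using S(3) iS by (simp add: cong_def add.commute)
    then show ?thesis by (simp add: cong_add_lcancel_nat)
  qed
  have "q dvd sum f {..<p}" using H p2 by (intro H[rule_format]) auto
  moreover have "[sum f {..<p} = sum (\<lambda>_. f 0) {..<p}] (mod q)"
    using eqm by (intro cong_sum) simp
  ultimately have "q dvd p * f 0" by (simp add: cong_def dvd_eq_mod_eq_0)
  moreover have "\<not> q dvd p" using primes_dvd_imp_eq[OF q p] pq by blast
  ultimately show ?thesis using prime_dvd_mult_iff[OF q] by blast
qed

definition wt :: "bool list \<Rightarrow> nat" where
  "wt xs = card {i. i < length xs \<and> xs!i}"

definition tau :: "nat \<Rightarrow> bool list set" where
  "tau p = {xs. length xs = 2*p \<and> p dvd wt xs}"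

definition cols :: "nat \<Rightarrow> bool list list" where
  "cols p = filter (\<lambda>c. wt c = p) (List.n_lists (2*p) [True,False])"

definition pt :: "nat \<Rightarrow> nat \<Rightarrow> bool list" where
  "pt p i = map (\<lambda>c. c!i) (cols p)"

definition hf :: "nat \<Rightarrow> pfun" where
  "hf p = (length (cols p), \<lambda>xs. if \<exists>i<2*p. xs = pt p i then Some (xs = pt p 0) else None)"

lemma set_cols: "set (cols p) = {c. length c = 2*p \<and> wt c = p}"
  by (auto simp: cols_def set_n_lists)

lemma wt_cT: "T \<subseteq> {..<n} \<Longrightarrow> wt (map (\<lambda>i. i\<in>T) [0..<n]) = card T"
  unfolding wt_def by (rule arg_cong[where f=card]) auto

lemma cT_in: assumes "T \<subseteq> {..<2*p}" "card T = p"
  shows "\<exists>l<length (cols p). cols p ! l = map (\<lambda>i. i\<in>T) [0..<2*p]"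
proof -
  have "map (\<lambda>i. i\<in>T) [0..<2*p] \<in> set (cols p)" using assms wt_cT[OF assms(1)] by (simp add: set_cols)
  then show ?thesis by (simp add: in_set_conv_nth)
qed

lemma pt_nth: "l < length (cols p) \<Longrightarrow> pt p i ! l = cols p ! l ! i"
  by (simp add: pt_def)

lemma length_pt: "length (pt p i) = length (cols p)"
  by (simp add: pt_def)

lemma sep_col:
  assumes p: "2 \<le> p" and "i < 2*p" "j < 2*p" "k < 2*p" "i \<noteq> j" "i \<noteq> k"
  shows "\<exists>l<length (cols p). pt p i ! l \<and> \<not> pt p j ! l \<and> \<not> pt p k ! l"
proof -
  obtain T where T: "T \<subseteq> {..<2*p}" "card T = p" "i\<in>T" "j\<notin>T" "k\<notin>T" using exT[OF assms] by blast
  obtain l where l: "l < length (cols p)" "cols p ! l = map (\<lambda>i. i\<in>T) [0..<2*p]" using cT_in[OF T(1,2)] by blast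
  show ?thesis using l T assms by (intro exI[of _ l]) (simp add: pt_nth)
qed

lemma pt_inj: assumes "2 \<le> p" "i < 2*p" "j < 2*p" "pt p i = pt p j" shows "i = j"
proof (rule ccontr)
  assume "i \<noteq> j"
  then obtain l where "l<length (cols p)" "pt p i ! l" "\<not> pt p j ! l" using sep_col[OF assms(1,2,3,3)] by blast
  then show False using assms(4) by simp
qed

lemma cols_ne: "2 \<le> p \<Longrightarrow> 0 < length (cols p)"
  using sep_col[of p 0 1 1] by auto

lemma hf_P2: "2 \<le> p \<Longrightarrow> hf p \<in> P2"
  using cols_ne[of p] by (auto simp: hf_def P2_def length_pt Suc_le_eq split: if_splits)

lemma hf_snd: "snd (hf p) r = (if \<exists>i<2*p. r = pt p i then Some (r = pt p 0) else None)"
  by (simp add: hf_def)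

lemma hf_fst: "fst (hf p) = length (cols p)"
  by (simp add: hf_def)

lemma pairlem:
  assumes "\<exists>i<2*p. r = pt p i" "\<exists>i<2*p. r' = pt p i" "(r = pt p 0) \<noteq> (r' = pt p 0)"
  shows "\<exists>i. 0 < i \<and> i < 2*p \<and> ((r = pt p 0 \<and> r' = pt p i) \<or> (r = pt p i \<and> r' = pt p 0))"
proof (cases "r = pt p 0")
  case True
  then have r': "r' \<noteq> pt p 0" using assms(3) by simp
  obtain i where "i<2*p" "r' = pt p i" using assms(2) by blast
  moreover have "i \<noteq> 0" using r' calculation by (cases "i = 0") auto
  ultimately show ?thesis using True by auto
next
  case False
  then have r': "r' = pt p 0" using assms(3) by simp
  obtain i where "i<2*p" "r = pt p i" using assms(1) by blast
  moreover have "i \<noteq> 0" using False calculation by (cases "i = 0") auto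
  ultimately show ?thesis using r' by auto
qed

lemma len4: "length xs = 4 \<Longrightarrow> \<exists>a b c d. xs = [a,b,c,d]"
  by (auto simp: length_Suc_conv eval_nat_numeral)

lemma pairlem2:
  assumes "(r = pt p 0 \<and> r' = pt p i) \<or> (r = pt p i \<and> r' = pt p 0)" "pt p 0 ! l" "\<not> pt p i ! l"
  shows "r!l \<noteq> r'!l"
  using assms by auto

lemma hf_sigma: assumes p: "2 \<le> p" shows "pres sigma (hf p)"
  unfolding pres_def
proof (intro allI impI)
  fix rs assume a: "(\<forall>r\<in>set rs. snd (hf p) r \<noteq> None) \<and> (\<forall>l<fst (hf p). map (\<lambda>r. r ! l) rs \<in> sigma)"
  have dom: "\<forall>r\<in>set rs. \<exists>i<2*p. r = pt p i" using a by (auto simp: hf_snd split: if_splits)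
  have col: "\<forall>l<length (cols p). map (\<lambda>r. r ! l) rs \<in> sigma" using a by (simp add: hf_fst)
  then have "length rs = 4" using cols_ne[OF p] by (auto simp: sigma_def)
  then obtain r0 r1 r2 r3 where rs: "rs = [r0,r1,r2,r3]"
    using len4 by blast
  have d: "\<exists>i<2*p. r0 = pt p i" "\<exists>i<2*p. r1 = pt p i" "\<exists>i<2*p. r2 = pt p i" "\<exists>i<2*p. r3 = pt p i"
    using dom rs by auto
  have vals: "map (\<lambda>r. the (snd (hf p) r)) rs = [r0 = pt p 0, r1 = pt p 0, r2 = pt p 0, r3 = pt p 0]"
    using d rs by (simp add: hf_snd)
  have "(r0 = pt p 0) = (r1 = pt p 0) \<or> (r2 = pt p 0) = (r3 = pt p 0)"
  proof (rule ccontr)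
    assume "\<not> ?thesis"
    then have n1: "(r0 = pt p 0) \<noteq> (r1 = pt p 0)" and n2: "(r2 = pt p 0) \<noteq> (r3 = pt p 0)" by auto
    obtain i where i: "0 < i" "i < 2*p" "(r0 = pt p 0 \<and> r1 = pt p i) \<or> (r0 = pt p i \<and> r1 = pt p 0)"
      using pairlem[OF d(1,2) n1] by blast
    obtain j where j: "0 < j" "j < 2*p" "(r2 = pt p 0 \<and> r3 = pt p j) \<or> (r2 = pt p j \<and> r3 = pt p 0)"
      using pairlem[OF d(3,4) n2] by blast
    obtain l where l: "l < length (cols p)" "pt p 0 ! l" "\<not> pt p i ! l" "\<not> pt p j ! l"
    proof -
      have h0: "0 < 2*p" using p by simp
      have "0 \<noteq> i" "0 \<noteq> j" using i(1) j(1) by auto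
      then show ?thesis using sep_col[OF p h0 i(2) j(2)] that by blast
    qed
    have "r0!l \<noteq> r1!l" using pairlem2[OF i(3) l(2,3)] .
    moreover have "r2!l \<noteq> r3!l" using pairlem2[OF j(3) l(2,4)] .
    moreover have "map (\<lambda>r. r ! l) rs \<in> sigma" using col l(1) by blast
    ultimately show False using rs by (simp add: sigma_def)
  qed
  then show "map (\<lambda>r. the (snd (hf p) r)) rs \<in> sigma" using vals by (simp add: sigma_def)
qed

lemma cols_len: "l < length (cols p) \<Longrightarrow> length (cols p ! l) = 2*p \<and> wt (cols p ! l) = p"
proof -
  assume "l < length (cols p)"
  then have "cols p ! l \<in> set (cols p)" by simp
  then show ?thesis by (simp add: set_cols)
qed

lemma hf_not_tau: assumes p: "prime p" shows "\<not> pres (tau p) (hf p)"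
proof
  assume pr: "pres (tau p) (hf p)"
  have p2: "2 \<le> p" using p prime_ge_2_nat by blast
  define rs where "rs = map (pt p) [0..<2*p]"
  have dom: "\<forall>r\<in>set rs. snd (hf p) r \<noteq> None" by (auto simp: rs_def hf_snd)
  have col: "\<forall>l<fst (hf p). map (\<lambda>r. r ! l) rs \<in> tau p"
  proof (intro allI impI)
    fix l assume "l < fst (hf p)"
    then have l: "l < length (cols p)" by (simp add: hf_fst)
    have "map (\<lambda>r. r ! l) rs = cols p ! l"
      using cols_len[OF l] l by (intro nth_equalityI) (auto simp: rs_def pt_nth)
    then show "map (\<lambda>r. r ! l) rs \<in> tau p" using cols_len[OF l] by (simp add: tau_def)
  qed
  have img: "map (\<lambda>r. the (snd (hf p) r)) rs = map (\<lambda>i. i \<in> {0}) [0..<2*p]"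
  proof (intro nth_equalityI)
    show "length (map (\<lambda>r. the (snd (hf p) r)) rs) = length (map (\<lambda>i. i \<in> {0}) [0..<2*p])" by (simp add: rs_def)
  next
    fix t assume "t < length (map (\<lambda>r. the (snd (hf p) r)) rs)"
    then have t: "t < 2*p" by (simp add: rs_def)
    have "(pt p t = pt p 0) = (t = 0)" using pt_inj[OF p2 t] p2 by auto
    then show "map (\<lambda>r. the (snd (hf p) r)) rs ! t = map (\<lambda>i. i \<in> {0}) [0..<2*p] ! t"
      using t by (auto simp: rs_def hf_snd)
  qed
  have "map (\<lambda>r. the (snd (hf p) r)) rs \<in> tau p" using pr dom col unfolding pres_def by blast
  then have "p dvd wt (map (\<lambda>i. i \<in> {0}) [0..<2*p])" using img by (simp add: tau_def)
  moreover have "wt (map (\<lambda>i. i \<in> {0}) [0..<2*p]) = 1" using wt_cT[of "{0}" "2*p"] p2 by simp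
  ultimately show False using p2 by simp
qed

lemma hf_tau: assumes p: "prime p" and q: "prime q" and pq: "p \<noteq> q" shows "pres (tau q) (hf p)"
  unfolding pres_def
proof (intro allI impI)
  have p2: "2 \<le> p" using p prime_ge_2_nat by blast
  fix rs assume a: "(\<forall>r\<in>set rs. snd (hf p) r \<noteq> None) \<and> (\<forall>l<fst (hf p). map (\<lambda>r. r ! l) rs \<in> tau q)"
  have dom: "\<forall>r\<in>set rs. \<exists>i<2*p. r = pt p i" using a by (auto simp: hf_snd split: if_splits)
  have col: "\<forall>l<length (cols p). map (\<lambda>r. r ! l) rs \<in> tau q" using a by (simp add: hf_fst)
  have lrs: "length rs = 2*q" using col cols_ne[OF p2] by (auto simp: tau_def)
  define A where "A i = {t. t < length rs \<and> rs!t = pt p i}" for i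
  define f where "f i = card (A i)" for i
  have dom': "\<exists>i<2*p. rs!t = pt p i" if "t < length rs" for t using dom that by auto
  have H: "\<forall>T. T \<subseteq> {..<2*p} \<and> card T = p \<longrightarrow> q dvd sum f T"
  proof (intro allI impI)
    fix T assume T: "T \<subseteq> {..<2*p} \<and> card T = p"
    obtain l where l: "l < length (cols p)" "cols p ! l = map (\<lambda>i. i\<in>T) [0..<2*p]"
      using cT_in T by blast
    have eqs: "{t. t < length rs \<and> rs!t!l} = \<Union>(A ` T)"
    proof
      show "{t. t < length rs \<and> rs!t!l} \<subseteq> \<Union>(A ` T)"
      proof
        fix t assume "t \<in> {t. t < length rs \<and> rs!t!l}"
        then have t: "t < length rs" "rs!t!l" by auto
        obtain i where i: "i < 2*p" "rs!t = pt p i" using dom' t(1) by blast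
        have "i \<in> T" using t(2) i l by (simp add: pt_nth)
        then show "t \<in> \<Union>(A ` T)" using t i by (auto simp: A_def)
      qed
    next
      show "\<Union>(A ` T) \<subseteq> {t. t < length rs \<and> rs!t!l}"
      proof
        fix t assume "t \<in> \<Union>(A ` T)"
        then obtain i where i: "i \<in> T" "t < length rs" "rs!t = pt p i" by (auto simp: A_def)
        have "i < 2*p" using i T by auto
        then show "t \<in> {t. t < length rs \<and> rs!t!l}" using i l by (simp add: pt_nth)
      qed
    qed
    have fT: "finite T" using T finite_subset by blast
    have "card (\<Union>(A ` T)) = (\<Sum>i\<in>T. card (A i))"
    proof (rule card_UN_disjoint)
      show "finite T" by (rule fT)
      show "\<forall>i\<in>T. finite (A i)" by (simp add: A_def)
      show "\<forall>i\<in>T. \<forall>j\<in>T. i \<noteq> j \<longrightarrow> A i \<inter> A j = {}"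
      proof (intro ballI impI)
        fix i j assume ij: "i \<in> T" "j \<in> T" "i \<noteq> j"
        have "i < 2*p" "j < 2*p" using ij T by auto
        then show "A i \<inter> A j = {}" using ij pt_inj[OF p2] by (auto simp: A_def)
      qed
    qed
    moreover have "{i. i < length rs \<and> map (\<lambda>r. r ! l) rs ! i} = {t. t < length rs \<and> rs!t!l}" by auto
    ultimately have "wt (map (\<lambda>r. r ! l) rs) = sum f T" using eqs by (simp add: wt_def f_def)
    moreover have "q dvd wt (map (\<lambda>r. r ! l) rs)" using col l(1) by (simp add: tau_def)
    ultimately show "q dvd sum f T" by simp
  qed
  have "q dvd f 0" using modlem[OF p q pq H] .
  moreover have "wt (map (\<lambda>r. the (snd (hf p) r)) rs) = f 0"
  proof -
    have "{i. i < length rs \<and> map (\<lambda>r. the (snd (hf p) r)) rs ! i} = A 0"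
    proof -
      have "\<exists>i<2*p. pt p 0 = pt p i" using p2 by (intro exI[of _ 0]) auto
      then show ?thesis using dom' by (auto simp: A_def hf_snd)
    qed
    then show ?thesis by (simp add: wt_def f_def)
  qed
  ultimately show "map (\<lambda>r. the (snd (hf p) r)) rs \<in> tau q" using lrs by (simp add: tau_def)
qed




lemma closed_sigma: "closedR sigma"
  unfolding closedR_def sigma_def by auto

lemma wt_not: "wt (map Not xs) = length xs - wt xs"
proof -
  have "{i. i < length xs \<and> \<not> xs!i} = {..<length xs} - {i. i < length xs \<and> xs!i}" by auto
  then have "card {i. i < length xs \<and> \<not> xs!i} = length xs - card {i. i < length xs \<and> xs!i}"
    using card_Diff_subset[of "{i. i < length xs \<and> xs!i}" "{..<length xs}"] by auto
  moreover have "{i. i < length (map Not xs) \<and> map Not xs ! i} = {i. i < length xs \<and> \<not> xs!i}" by auto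
  ultimately show ?thesis by (simp add: wt_def)
qed

lemma wt_rep: "wt (replicate n b) = (if b then n else 0)"
proof -
  have "{i. i < length (replicate n b) \<and> replicate n b ! i} = (if b then {..<n} else {})" by auto
  then show ?thesis by (simp add: wt_def)
qed

lemma closed_tau: "closedR (tau q)"
  unfolding closedR_def tau_def by (auto simp: wt_not wt_rep)

definition Xs :: "nat set \<Rightarrow> pfun set" where
  "Xs A = PC (insert sigma {tau q | q. prime q \<and> q \<notin> A})"

lemma Xs_I: "Xs A \<in> I_str Omega1"
proof -
  let ?Rs = "insert sigma {tau q | q. prime q \<and> q \<notin> A}"
  have cl: "\<forall>R\<in>?Rs. closedR R" using closed_sigma closed_tau by auto
  have "Xs A \<inter> O2 = Omega1"
  proof
    show "Xs A \<inter> O2 \<subseteq> Omega1"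
    proof
      fix F assume "F \<in> Xs A \<inter> O2"
      then have "F \<in> O2" "pres sigma F" by (auto simp: Xs_def PC_def)
      then show "F \<in> Omega1" by (rule total_sigma_Omega1)
    qed
    show "Omega1 \<subseteq> Xs A \<inter> O2" using Omega1_PC[OF cl] Omega1_O2 by (auto simp: Xs_def)
  qed
  then show ?thesis using PC_clone PC_strong by (simp add: I_str_def Xs_def)
qed

lemma hf_Xs: assumes p: "prime p" shows "hf p \<in> Xs A \<longleftrightarrow> p \<in> A"
proof
  assume "hf p \<in> Xs A"
  then have "\<forall>R\<in>insert sigma {tau q | q. prime q \<and> q \<notin> A}. pres R (hf p)" by (simp add: Xs_def PC_def)
  then show "p \<in> A" using hf_not_tau[OF p] p by blast
next
  assume pA: "p \<in> A"
  have p2: "2 \<le> p" using p prime_ge_2_nat by blast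
  have "\<forall>R\<in>insert sigma {tau q | q. prime q \<and> q \<notin> A}. pres R (hf p)"
  proof
    fix R assume "R \<in> insert sigma {tau q | q. prime q \<and> q \<notin> A}"
    then show "pres R (hf p)"
    proof
      assume "R = sigma" then show ?thesis using hf_sigma[OF p2] by simp
    next
      assume "R \<in> {tau q | q. prime q \<and> q \<notin> A}"
      then obtain q where "R = tau q" "prime q" "q \<notin> A" by blast
      then show ?thesis using hf_tau[OF p, of q] pA by auto
    qed
  qed
  then show "hf p \<in> Xs A" using hf_P2[OF p2] by (simp add: Xs_def PC_def)
qed

lemma Xs_inj: "inj_on Xs (Pow {p. prime p})"
proof
  fix A B assume A: "A \<in> Pow {p. prime p}" and B: "B \<in> Pow {p. prime p}" and e: "Xs A = Xs B"
  show "A = B"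
  proof (rule ccontr)
    assume "A \<noteq> B"
    then obtain p where "p \<in> A \<and> p \<notin> B \<or> p \<in> B \<and> p \<notin> A" by blast
    moreover have "prime p" using calculation A B by auto
    ultimately show False using hf_Xs e by metis
  qed
qed

lemma P2_countable: "countable P2"
proof -
  define enc where "enc F = to_nat (fst F, map (snd F) (List.n_lists (fst F) [True,False]))" for F :: pfun
  have "inj_on enc P2"
  proof
    fix F G assume F: "F \<in> P2" and G: "G \<in> P2" and e: "enc F = enc G"
    obtain n f where Fn: "F = (n,f)" by (cases F)
    obtain m g where Gm: "G = (m,g)" by (cases G)
    have eq: "(n, map f (List.n_lists n [True,False])) = (m, map g (List.n_lists m [True,False]))"
    proof -
      have "to_nat (n, map f (List.n_lists n [True,False])) = to_nat (m, map g (List.n_lists m [True,False]))"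
        using e Fn Gm by (simp only: enc_def fst_conv snd_conv)
      then show ?thesis by (rule injD[OF inj_to_nat])
    qed
    then have nm: "n = m" by simp
    have h: "map f (List.n_lists n [True,False]) = map g (List.n_lists m [True,False])"
      using eq by (rule prod.inject[THEN iffD1, THEN conjunct2])
    from h[unfolded nm[symmetric]] have fg: "\<forall>xs\<in>set (List.n_lists n [True,False]). f xs = g xs" unfolding map_eq_conv .
    have "f xs = g xs" for xs
    proof (cases "length xs = n")
      case True
      then have "xs \<in> set (List.n_lists n [True,False])" by (auto simp: set_n_lists)
      then show ?thesis using fg by blast
    next
      case False
      then have "f xs = None" "g xs = None" using F G Fn Gm nm by (auto simp: P2_def)
      then show ?thesis by simp
    qed
    then show "F = G" using Fn Gm nm by auto
  qed
  then show ?thesis by (rule countableI)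
qed

theorem mainTheorem9:
  shows "I_str Omega1 \<approx> (UNIV :: real set)"
proof -
  have c1: "I_str Omega1 \<lesssim> (UNIV :: nat set set)"
  proof -
    obtain g :: "pfun \<Rightarrow> nat" where g: "inj_on g P2" using P2_countable by (rule countableE)
    have sub: "I_str Omega1 \<subseteq> Pow P2" by (auto simp: I_str_def partial_clone_def)
    have "inj_on (image g) (I_str Omega1)" using inj_on_image_Pow[OF g] sub by (rule inj_on_subset)
    then show ?thesis unfolding lepoll_def by blast
  qed
  have c2: "(UNIV :: nat set set) \<lesssim> I_str Omega1"
  proof -
    have "(UNIV::nat set) \<lesssim> {p::nat. prime p}" using primes_infinite infinite_le_lepoll by blast
    then obtain e :: "nat \<Rightarrow> nat" where e: "inj_on e UNIV" "e ` UNIV \<subseteq> {p. prime p}"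
      unfolding lepoll_def by blast
    have i1: "inj_on (image e) (UNIV :: nat set set)" using inj_on_image_Pow[OF e(1)] by simp
    have im: "image e ` (UNIV :: nat set set) \<subseteq> Pow {p. prime p}" using e(2) by auto
    have "inj_on (Xs \<circ> image e) UNIV"
      using comp_inj_on[OF i1 inj_on_subset[OF Xs_inj im]] .
    moreover have "(Xs \<circ> image e) ` UNIV \<subseteq> I_str Omega1" using Xs_I by auto
    ultimately show ?thesis unfolding lepoll_def by blast
  qed
  have "I_str Omega1 \<approx> (UNIV :: nat set set)" using lepoll_antisym[OF c1 c2] .
  then show ?thesis using nat_sets_eqpoll_reals by (rule eqpoll_trans)
qed


end
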